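(* For all $1\le i\le n$ and $1\le r\le n$, $$|\mathcal{I}^{(r)}_{x_i}(P_n^* )|\le |\mathcal{I}^{(r)}_{p_i}(P_n^* )|.$$
   Context: $\mathcal{I}^{(r)}_v(G)$ denotes the family of independent $r$-sets (sets of $r$ pairwise non-adjacent vertices) of a graph $G$ containing the vertex $v$. For a graph $G$ with vertices $x_1,\dots,x_n$, the pendant graph $G^*$ has vertex set $\{x_1,\dots,x_n\}\sqcup\{p_1,\dots,p_n\}$ and edge set $E(G)\sqcup\{x_1p_1,\dots,x_np_n\}$. $P_n$ is the path with vertices $x_1,\dots,x_n$ and edges $x_jx_{j+1}$, $1\le j\le n-1$, and $P_n^*$ its pendant graph. *)

theory Defs
  imports Main
begin

record 'a sgraph =
  verts :: "'a set"
  edges :: "'a set set"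

definition independent_set :: "'a sgraph \<Rightarrow> 'a set \<Rightarrow> bool" where
  "independent_set G S \<longleftrightarrow> S \<subseteq> verts G \<and> (\<forall>u\<in>S. \<forall>v\<in>S. {u, v} \<notin> edges G)"

definition indep_r_sets_at :: "'a sgraph \<Rightarrow> nat \<Rightarrow> 'a \<Rightarrow> 'a set set" where
  "indep_r_sets_at G r v = {S. independent_set G S \<and> card S = r \<and> v \<in> S}"

(* Pendant graph G^*: vertex x becomes Inl x, its pendant p_x is Inr x *)
definition pendant :: "'a sgraph \<Rightarrow> ('a + 'a) sgraph" where
  "pendant G = \<lparr> verts = Inl ` verts G \<union> Inr ` verts G,
                 edges = (\<lambda>e. Inl ` e) ` edges G \<union> {{Inl x, Inr x} | x. x \<in> verts G} \<rparr>"

(* Path P_n on vertices x_1..x_n (vertex x_j represented by j) with edges x_j x_(j+1) *)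
definition path_graph :: "nat \<Rightarrow> nat sgraph" where
  "path_graph n = \<lparr> verts = {1..n}, edges = {{j, j + 1} | j. 1 \<le> j \<and> j + 1 \<le> n} \<rparr>"

end

theory Submission
  imports Defs
begin

lemma pend_edge_Inr:
  assumes "{Inr i, v} \<in> edges (pendant G)"
  shows "v = Inl i"
proof -
  from assms have "{Inr i, v} \<in> (\<lambda>e. Inl ` e) ` edges G \<or> {Inr i, v} \<in> {{Inl x, Inr x} | x. x \<in> verts G}"
    by (simp add: pendant_def)
  then show ?thesis
  proof
    assume "{Inr i, v} \<in> (\<lambda>e. Inl ` e) ` edges G"
    then obtain e where "{Inr i, v} = Inl ` e" by auto
    then have "Inr i \<in> Inl ` e" by (metis insertI1)
    then show ?thesis by auto
  next
    assume "{Inr i, v} \<in> {{Inl x, Inr x} | x. x \<in> verts G}"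
    then obtain x where "{Inr i, v} = {Inl x, Inr x}" by auto
    then show ?thesis by (metis doubleton_eq_iff sum.distinct(2) sum.inject(2))
  qed
qed

theorem lemma5:
  fixes n i r :: nat
  assumes "1 \<le> i" "i \<le> n" "1 \<le> r" "r \<le> n"
  shows "card (indep_r_sets_at (pendant (path_graph n)) r (Inl i))
           \<le> card (indep_r_sets_at (pendant (path_graph n)) r (Inr i))"
proof -
  let ?G = "pendant (path_graph n)"
  define f where "f S = insert (Inr i) (S - {Inl i})" for S :: "(nat + nat) set"
  have iv: "i \<in> verts (path_graph n)" using assms by (simp add: path_graph_def)
  have e: "{Inl i, Inr i} \<in> edges ?G" using iv by (auto simp: pendant_def)
  have fin: "finite (verts ?G)" by (simp add: pendant_def path_graph_def)
  have B: "finite (indep_r_sets_at ?G r (Inr i))"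
  proof (rule finite_subset[of _ "Pow (verts ?G)"])
    show "indep_r_sets_at ?G r (Inr i) \<subseteq> Pow (verts ?G)"
      by (auto simp: indep_r_sets_at_def independent_set_def)
  qed (use fin in simp)
  have inj: "inj_on f (indep_r_sets_at ?G r (Inl i))"
  proof (rule inj_onI)
    fix S T assume S: "S \<in> indep_r_sets_at ?G r (Inl i)" and T: "T \<in> indep_r_sets_at ?G r (Inl i)"
      and eq: "f S = f T"
    have nS: "Inr i \<notin> S" using S e by (auto simp: indep_r_sets_at_def independent_set_def)
    have nT: "Inr i \<notin> T" using T e by (auto simp: indep_r_sets_at_def independent_set_def)
    have "S = insert (Inl i) (f S - {Inr i})" using S nS by (auto simp: f_def indep_r_sets_at_def)
    also have "\<dots> = insert (Inl i) (f T - {Inr i})" using eq by simp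
    also have "\<dots> = T" using T nT by (auto simp: f_def indep_r_sets_at_def)
    finally show "S = T" .
  qed
  have img: "f ` indep_r_sets_at ?G r (Inl i) \<subseteq> indep_r_sets_at ?G r (Inr i)"
  proof
    fix X assume "X \<in> f ` indep_r_sets_at ?G r (Inl i)"
    then obtain S where S: "S \<in> indep_r_sets_at ?G r (Inl i)" and X: "X = f S" by auto
    have nS: "Inr i \<notin> S" using S e by (auto simp: indep_r_sets_at_def independent_set_def)
    have ind: "independent_set ?G S" and c: "card S = r" and li: "Inl i \<in> S"
      using S by (auto simp: indep_r_sets_at_def)
    have finS: "finite S" using ind fin by (meson independent_set_def finite_subset)
    have "card X = r" using c li nS finS card_gt_0_iff[of S] by (auto simp add: X f_def)
    moreover have "X \<subseteq> verts ?G" using ind iv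
      by (auto simp: X f_def independent_set_def pendant_def)
    moreover have "\<forall>u\<in>X. \<forall>v\<in>X. {u, v} \<notin> edges ?G"
    proof (intro ballI)
      fix u v assume u: "u \<in> X" and v: "v \<in> X"
      show "{u, v} \<notin> edges ?G"
      proof
        assume E: "{u, v} \<in> edges ?G"
        show False
        proof (cases "u = Inr i")
          case True
          then have "v = Inl i" using E pend_edge_Inr by metis
          then show False using v by (simp add: X f_def)
        next
          case False
          note uF = False
          show False
          proof (cases "v = Inr i")
            case True
            then have "{Inr i, u} \<in> edges ?G" using E by (simp add: insert_commute)
            then have "u = Inl i" using pend_edge_Inr by metis
            then show False using u by (simp add: X f_def)
          next
            case False
            then have "u \<in> S" "v \<in> S" using u v uF by (auto simp: X f_def)
            then show False using ind E by (auto simp: independent_set_def)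
          qed
        qed
      qed
    qed
    ultimately show "X \<in> indep_r_sets_at ?G r (Inr i)"
      by (simp add: indep_r_sets_at_def independent_set_def X f_def)
  qed
  show ?thesis by (rule card_inj_on_le[OF inj img B])
qed

end
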